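(* Fix integers $p\ge 3$, $q\ge 1$ and a real $\eta$ with $0<\eta<\frac{1}{7p^5q}$. For all sufficiently large $n$ the following holds for the graph $G$ described in the context: $G$ admits a vertex partition $V(G)=V_1\cup\cdots\cup V_p$ with $\sum_{i=1}^p e(V_i)\le \eta^3n^2$; moreover, for every vertex partition $V(G)=V_1\cup\cdots\cup V_p$ with $\sum_{i=1}^p e(V_i)\le \eta^3n^2$, we have $\big||V_i|-\frac{n}{p}\big|\le \eta n$ for each $i\in[p]$.
   Context: $B_{p,q}=K_p\nabla qK_1$ is the join of a clique $K_p$ and an independent set of $q$ vertices. $\mathcal{G}(n,p,q)$ is the set of $n$-vertex graphs with chromatic number greater than $p$ that contain no subgraph isomorphic to $B_{p,q}$ and have the maximum number of edges among all such graphs. $G$ is a graph in $\mathcal{G}(n,p,q)$ whose minimum degree $\delta(G)$ equals $\min_{F\in\mathcal{G}(n,p,q)}\delta(F)$. For $U\subseteq V(G)$, $e(U)$ is the number of edges of $G$ with both ends in $U$; $[p]=\{1,\dots,p\}$. *)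

theory Defs
  imports Complex_Main
begin

definition simple_graph :: "nat \<Rightarrow> nat set set \<Rightarrow> bool" where
  "simple_graph n E \<longleftrightarrow> E \<subseteq> {{u, v} | u v. u \<noteq> v \<and> u < n \<and> v < n}"

definition colorable :: "nat \<Rightarrow> nat set set \<Rightarrow> nat \<Rightarrow> bool" where
  "colorable n E k \<longleftrightarrow> (\<exists>c :: nat \<Rightarrow> nat. (\<forall>v<n. c v < k) \<and>
      (\<forall>u v. {u, v} \<in> E \<and> u \<noteq> v \<longrightarrow> c u \<noteq> c v))"

definition chromatic_number :: "nat \<Rightarrow> nat set set \<Rightarrow> nat" where
  "chromatic_number n E = (LEAST k. colorable n E k)"

definition contains_subgraph :: "nat \<Rightarrow> nat set set \<Rightarrow> nat \<Rightarrow> nat set set \<Rightarrow> bool" where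
  "contains_subgraph n E m H \<longleftrightarrow> (\<exists>f :: nat \<Rightarrow> nat. inj_on f {..<m} \<and> f ` {..<m} \<subseteq> {..<n} \<and>
      (\<forall>e\<in>H. f ` e \<in> E))"

text \<open>B_{p,q} = K_p join (q K_1), on vertex set {..<p+q}: vertices < p form the clique,
  vertices p..p+q-1 form the independent set.\<close>
definition B_graph :: "nat \<Rightarrow> nat \<Rightarrow> nat set set" where
  "B_graph p q = {{i, j} | i j. i \<noteq> j \<and> i < p \<and> j < p + q}"

definition admissible :: "nat \<Rightarrow> nat \<Rightarrow> nat \<Rightarrow> nat set set \<Rightarrow> bool" where
  "admissible n p q E \<longleftrightarrow> simple_graph n E \<and> chromatic_number n E > p \<and>
      \<not> contains_subgraph n E (p + q) (B_graph p q)"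

definition extremal_family :: "nat \<Rightarrow> nat \<Rightarrow> nat \<Rightarrow> nat set set set" where
  "extremal_family n p q = {E. admissible n p q E \<and>
      (\<forall>F. admissible n p q F \<longrightarrow> card F \<le> card E)}"

definition degree :: "nat set set \<Rightarrow> nat \<Rightarrow> nat" where
  "degree E v = card {u. {u, v} \<in> E}"

definition min_degree :: "nat \<Rightarrow> nat set set \<Rightarrow> nat" where
  "min_degree n E = Min (degree E ` {..<n})"

definition edges_in :: "nat set set \<Rightarrow> nat set \<Rightarrow> nat" where
  "edges_in E U = card {e \<in> E. e \<subseteq> U}"

text \<open>Vertex partition of {..<n} into parts V 1, ..., V p (parts may be empty).\<close>
definition vertex_partition :: "nat \<Rightarrow> nat \<Rightarrow> (nat \<Rightarrow> nat set) \<Rightarrow> bool" where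
  "vertex_partition n p V \<longleftrightarrow> (\<Union>i\<in>{1..p}. V i) = {..<n} \<and>
      (\<forall>i\<in>{1..p}. \<forall>j\<in>{1..p}. i \<noteq> j \<longrightarrow> V i \<inter> V j = {})"

end

theory Submission
  imports Defs
begin


definition nb :: "nat set set \<Rightarrow> nat set \<Rightarrow> nat \<Rightarrow> nat set" where
  "nb G T u = {v\<in>T. {u,v}\<in>G}"
definition PP :: "nat set set \<Rightarrow> nat set \<Rightarrow> nat set \<Rightarrow> nat" where
  "PP G S T = (\<Sum>u\<in>S. card (nb G T u))"
definition clq :: "nat set set \<Rightarrow> nat set \<Rightarrow> bool" where
  "clq G K \<longleftrightarrow> (\<forall>u\<in>K. \<forall>v\<in>K. u \<noteq> v \<longrightarrow> {u,v}\<in>G)"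

lemma PP_pairs:
  assumes "finite S" "finite T"
  shows "PP G S T = card {(u,v). u\<in>S \<and> v\<in>T \<and> {u,v}\<in>G}"
proof -
  have "{(u,v). u\<in>S \<and> v\<in>T \<and> {u,v}\<in>G} = (SIGMA u:S. nb G T u)"
    by (auto simp: nb_def)
  then show ?thesis using assms by (simp add: PP_def nb_def)
qed

lemma PP_sym:
  assumes "finite S" "finite T"
  shows "PP G S T = PP G T S"
proof -
  have "{(u,v). u\<in>T \<and> v\<in>S \<and> {u,v}\<in>G} = (\<lambda>(a,b). (b,a)) ` {(u,v). u\<in>S \<and> v\<in>T \<and> {u,v}\<in>G}"
  proof (rule set_eqI)
    fix z :: "nat \<times> nat"
    obtain a b where z: "z = (a,b)" by (cases z)
    have "{a,b} = {b,a}" by (rule insert_commute)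
    then show "z \<in> {(u,v). u\<in>T \<and> v\<in>S \<and> {u,v}\<in>G} \<longleftrightarrow> z \<in> (\<lambda>(a,b). (b,a)) ` {(u,v). u\<in>S \<and> v\<in>T \<and> {u,v}\<in>G}"
      unfolding z by (auto simp: image_iff)
  qed
  moreover have "inj_on (\<lambda>(a,b). (b,a)) X" for X :: "(nat\<times>nat) set"
    by (auto simp: inj_on_def)
  ultimately show ?thesis using assms by (simp add: PP_pairs card_image)
qed

lemma PP_union_left:
  assumes "finite S1" "finite S2" "S1 \<inter> S2 = {}"
  shows "PP G (S1 \<union> S2) T = PP G S1 T + PP G S2 T"
  using assms by (simp add: PP_def sum.union_disjoint)

lemma PP_union_right:
  assumes "finite T1" "finite T2" "T1 \<inter> T2 = {}"
  shows "PP G S (T1 \<union> T2) = PP G S T1 + PP G S T2"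
proof -
  have "card (nb G (T1 \<union> T2) u) = card (nb G T1 u) + card (nb G T2 u)" for u
  proof -
    have "nb G (T1 \<union> T2) u = nb G T1 u \<union> nb G T2 u" by (auto simp: nb_def)
    moreover have "nb G T1 u \<inter> nb G T2 u = {}" using assms(3) by (auto simp: nb_def)
    ultimately show ?thesis using assms by (simp add: card_Un_disjoint nb_def)
  qed
  then show ?thesis by (simp add: PP_def sum.distrib)
qed

lemma dbl_pairs: "{(u,v). {u,v} = {a,b}} = {(a,b),(b,a)}"
proof (rule set_eqI)
  fix z :: "'a \<times> 'a"
  obtain u v where z: "z = (u,v)" by (cases z)
  show "z \<in> {(u,v). {u,v} = {a,b}} \<longleftrightarrow> z \<in> {(a,b),(b,a)}"
    unfolding z using doubleton_eq_iff[of u v a b] by simp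
qed

lemma pairs2:
  assumes "finite E" "\<forall>e\<in>E. \<exists>u v. u \<noteq> v \<and> e = {u,v}"
  shows "card {(u,v). {u,v}\<in>E} = 2 * card E"
proof -
  have eq: "{(u,v). {u,v}\<in>E} = (\<Union>e\<in>E. {(u,v). {u,v} = e})" by blast
  have c2: "card {(u,v). {u,v} = e} = 2 \<and> finite {(u,v). {u,v} = e}" if e_in: "e \<in> E" for e
  proof -
    obtain a b where ab: "a \<noteq> b" "e = {a,b}" using bspec[OF assms(2) e_in] by metis
    show ?thesis unfolding ab(2) dbl_pairs using ab(1) by simp
  qed
  have disj: "\<forall>i\<in>E. \<forall>j\<in>E. i \<noteq> j \<longrightarrow> {(u,v). {u,v} = i} \<inter> {(u,v). {u,v} = j} = {}"
    by blast
  have "card (\<Union>e\<in>E. {(u,v). {u,v} = e}) = (\<Sum>e\<in>E. card {(u,v). {u,v} = e})"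
    by (rule card_UN_disjoint[OF assms(1)]) (use c2 disj in auto)
  also have "\<dots> = (\<Sum>e\<in>E. 2)" using c2 by simp
  finally show ?thesis using eq by simp
qed

lemma sg_finite: "simple_graph n G \<Longrightarrow> finite G"
  unfolding simple_graph_def
  by (rule finite_subset[of _ "Pow {..<n}"]) auto

lemma sg_noloop: "simple_graph n G \<Longrightarrow> {u,u} \<notin> G"
  unfolding simple_graph_def by (auto simp: doubleton_eq_iff)

lemma edges2:
  assumes "simple_graph n G" "finite S"
  shows "2 * edges_in G S = PP G S S"
proof -
  let ?E = "{e\<in>G. e \<subseteq> S}"
  have fin: "finite ?E" using sg_finite[OF assms(1)] by simp
  have "\<forall>e\<in>?E. \<exists>u v. u \<noteq> v \<and> e = {u,v}" using assms(1) unfolding simple_graph_def by blast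
  then have "card {(u,v). {u,v}\<in>?E} = 2 * card ?E" using pairs2 fin by blast
  moreover have "{(u,v). {u,v}\<in>?E} = {(u,v). u\<in>S \<and> v\<in>S \<and> {u,v}\<in>G}" by auto
  ultimately show ?thesis using assms(2) by (simp add: edges_in_def PP_pairs)
qed



lemma arith_step:
  fixes k a b s X Y :: real
  assumes "k \<ge> 1" "a \<ge> 0" "b \<ge> 0" "s \<ge> 0"
    "k*X \<le> (k-1)*b^2 + 2*k*s*b" "Y \<le> X + 2*a*b"
  shows "(k+1)*Y \<le> k*(a+b)^2 + 2*(k+1)*s*(a+b)"
proof -
  have h1: "(k+1)*Y \<le> (k+1)*(X+2*a*b)" using assms by (intro mult_left_mono) auto
  have h3: "(k+1)*(k*X) \<le> (k+1)*((k-1)*b^2 + 2*k*s*b)" using assms by (intro mult_left_mono) auto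
  have eq: "k*(k*(a+b)^2 + 2*(k+1)*s*(a+b)) - ((k+1)*((k-1)*b^2 + 2*k*s*b) + 2*k*(k+1)*a*b)
      = (k*a-b)^2 + 2*k*(k+1)*s*a" by (simp add: algebra_simps power2_eq_square)
  have "0 \<le> 2*k*(k+1)*s*a" using assms by simp
  then have h4: "(k+1)*((k-1)*b^2 + 2*k*s*b) + 2*k*(k+1)*a*b \<le> k*(k*(a+b)^2 + 2*(k+1)*s*(a+b))"
    using eq by (smt (verit) zero_le_power2)
  have "k*((k+1)*Y) \<le> k*((k+1)*(X+2*a*b))" using h1 assms by (intro mult_left_mono) auto
  also have "\<dots> = (k+1)*(k*X) + 2*k*(k+1)*a*b" by (simp add: algebra_simps)
  also have "\<dots> \<le> k*(k*(a+b)^2 + 2*(k+1)*s*(a+b))" using h3 h4 by linarith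
  finally show ?thesis using assms(1) by simp
qed

lemma furedi:
  fixes G :: "nat set set" and s :: nat
  assumes noloop: "\<And>u. {u,u} \<notin> G" and k1: "k \<ge> 1"
  shows "\<forall>D. finite D \<longrightarrow> (\<forall>K. K \<subseteq> D \<and> clq G K \<and> card K = k \<longrightarrow> card {v\<in>D. \<forall>u\<in>K. {u,v}\<in>G} \<le> s) \<longrightarrow>
    (\<exists>V. (\<Union>i\<in>{1..k}. V i) = D \<and> (\<forall>i\<in>{1..k}. \<forall>j\<in>{1..k}. i\<noteq>j \<longrightarrow> V i \<inter> V j = {}) \<and>
     real k * (real (PP G D D) + real (\<Sum>i\<in>{1..k}. PP G (V i) (V i)))
       \<le> real (k-1) * real (card D)^2 + 2*real k*real s*real (card D))"
  using k1
proof (induction k rule: nat_induct_at_least)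
  case base
  show ?case
  proof (intro allI impI)
    fix D :: "nat set"
    assume fD: "finite D" and cn: "\<forall>K. K \<subseteq> D \<and> clq G K \<and> card K = 1 \<longrightarrow> card {v\<in>D. \<forall>u\<in>K. {u,v}\<in>G} \<le> s"
    have "card (nb G D u) \<le> s" if "u \<in> D" for u
    proof -
      have "card {v\<in>D. \<forall>w\<in>{u}. {w,v}\<in>G} \<le> s" by (rule cn[rule_format]) (simp add: clq_def that)
      moreover have "{v\<in>D. \<forall>w\<in>{u}. {w,v}\<in>G} = nb G D u" by (auto simp: nb_def)
      ultimately show ?thesis by simp
    qed
    then have "PP G D D \<le> s * card D" unfolding PP_def
      using sum_bounded_above[of D "\<lambda>u. card (nb G D u)" s] by (simp add: mult.commute)
    then have "real (PP G D D) \<le> real s * real (card D)" by (metis of_nat_le_iff of_nat_mult)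
    moreover have o: "{1..1::nat} = {1}" by auto
    ultimately show "\<exists>V. (\<Union>i\<in>{1..1::nat}. V i) = D \<and> (\<forall>i\<in>{1..1::nat}. \<forall>j\<in>{1..1::nat}. i\<noteq>j \<longrightarrow> V i \<inter> V j = {}) \<and>
     real 1 * (real (PP G D D) + real (\<Sum>i\<in>{1..1::nat}. PP G (V i) (V i)))
       \<le> real (1-1) * real (card D)^2 + 2*real 1*real s*real (card D)"
      by (intro exI[of _ "\<lambda>_. D"]) (simp add: o)
  qed
next
  case (Suc k)
  show ?case
  proof (intro allI impI)
    fix D :: "nat set"
    assume fD: "finite D" and cn: "\<forall>K. K \<subseteq> D \<and> clq G K \<and> card K = Suc k \<longrightarrow> card {v\<in>D. \<forall>u\<in>K. {u,v}\<in>G} \<le> s"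
    show "\<exists>V. (\<Union>i\<in>{1..Suc k}. V i) = D \<and> (\<forall>i\<in>{1..Suc k}. \<forall>j\<in>{1..Suc k}. i\<noteq>j \<longrightarrow> V i \<inter> V j = {}) \<and>
     real (Suc k) * (real (PP G D D) + real (\<Sum>i\<in>{1..Suc k}. PP G (V i) (V i)))
       \<le> real (Suc k-1) * real (card D)^2 + 2*real (Suc k)*real s*real (card D)"
    proof (cases "D = {}")
      case True
      then show ?thesis by (intro exI[of _ "\<lambda>_. {}"]) (simp add: PP_def)
    next
      case False
      define M where "M = Max ((\<lambda>y. card (nb G D y)) ` D)"
      have "M \<in> (\<lambda>y. card (nb G D y)) ` D" unfolding M_def using fD False by (intro Max_in) auto
      then obtain x where xD: "x \<in> D" and xM: "card (nb G D x) = M" by auto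
      have xmax: "card (nb G D y) \<le> card (nb G D x)" if "y \<in> D" for y
        unfolding xM M_def using fD that by (intro Max_ge) auto
      define D' where "D' = nb G D x"
      define W where "W = D - D'"
      have D'D: "D' \<subseteq> D" unfolding D'_def nb_def by auto
      have fD': "finite D'" using D'D fD finite_subset by blast
      have fW: "finite W" using fD unfolding W_def by simp
      have DWD: "D = W \<union> D'" using D'D unfolding W_def by auto
      have WD: "W \<inter> D' = {}" unfolding W_def by auto
      have WsD: "W \<subseteq> D" unfolding W_def by auto
      have xnD': "x \<notin> D'" unfolding D'_def nb_def using noloop by auto
      have cn': "\<forall>K. K \<subseteq> D' \<and> clq G K \<and> card K = k \<longrightarrow> card {v\<in>D'. \<forall>u\<in>K. {u,v}\<in>G} \<le> s"
      proof (intro allI impI)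
        fix K assume K: "K \<subseteq> D' \<and> clq G K \<and> card K = k"
        have fK: "finite K" using K fD' finite_subset by blast
        have xK: "x \<notin> K" using K xnD' by auto
        have adjx: "{x,u} \<in> G" if "u \<in> K" for u using K that unfolding D'_def nb_def by auto
        have "insert x K \<subseteq> D" using K D'D xD by auto
        moreover have "clq G (insert x K)" unfolding clq_def
        proof (intro ballI impI)
          fix u v assume uv: "u \<in> insert x K" "v \<in> insert x K" "u \<noteq> v"
          show "{u,v} \<in> G"
          proof (cases "u = x")
            case True then show ?thesis using uv adjx by auto
          next
            case False
            note uF = False
            show ?thesis
            proof (cases "v = x")
              case True then show ?thesis using uv uF adjx by (auto simp: insert_commute)
            next
              case False then show ?thesis using uv uF K unfolding clq_def by auto
            qed
          qed
        qed
        moreover have "card (insert x K) = Suc k" using fK xK K by simp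
        ultimately have c: "card {v\<in>D. \<forall>u\<in>insert x K. {u,v}\<in>G} \<le> s" by (intro cn[rule_format] conjI)
        have sub: "{v\<in>D'. \<forall>u\<in>K. {u,v}\<in>G} \<subseteq> {v\<in>D. \<forall>u\<in>insert x K. {u,v}\<in>G}"
          using D'D unfolding D'_def nb_def by auto
        then show "card {v\<in>D'. \<forall>u\<in>K. {u,v}\<in>G} \<le> s"
          using le_trans[OF card_mono[OF _ sub] c] fD by simp
      qed
      obtain V where Vu: "(\<Union>i\<in>{1..k}. V i) = D'" and Vd: "\<forall>i\<in>{1..k}. \<forall>j\<in>{1..k}. i\<noteq>j \<longrightarrow> V i \<inter> V j = {}"
        and Vb: "real k * (real (PP G D' D') + real (\<Sum>i\<in>{1..k}. PP G (V i) (V i)))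
          \<le> real (k-1) * real (card D')^2 + 2*real k*real s*real (card D')"
        using Suc.IH[rule_format, OF fD' cn'[rule_format]] by meson
      define V' where "V' = V(Suc k := W)"
      have VsubD': "V i \<subseteq> D'" if "i \<in> {1..k}" for i using Vu that by auto
      have u': "(\<Union>i\<in>{1..Suc k}. V' i) = D"
      proof -
        have "{1..Suc k} = insert (Suc k) {1..k}" by auto
        then have "(\<Union>i\<in>{1..Suc k}. V' i) = V' (Suc k) \<union> (\<Union>i\<in>{1..k}. V' i)" by simp
        also have "V' (Suc k) = W" unfolding V'_def by simp
        also have "(\<Union>i\<in>{1..k}. V' i) = (\<Union>i\<in>{1..k}. V i)" unfolding V'_def by auto
        finally show ?thesis using Vu DWD by simp
      qed
      have d': "\<forall>i\<in>{1..Suc k}. \<forall>j\<in>{1..Suc k}. i\<noteq>j \<longrightarrow> V' i \<inter> V' j = {}"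
      proof (intro ballI impI)
        fix i j assume ij: "i \<in> {1..Suc k}" "j \<in> {1..Suc k}" "i \<noteq> j"
        show "V' i \<inter> V' j = {}"
        proof (cases "i = Suc k")
          case True
          then have "j \<in> {1..k}" using ij by auto
          then show ?thesis using True VsubD'[of j] WD ij unfolding V'_def by auto
        next
          case False
          note iF = False
          then have i1: "i \<in> {1..k}" using ij by auto
          show ?thesis
          proof (cases "j = Suc k")
            case True
            then show ?thesis using i1 iF VsubD'[of i] WD unfolding V'_def by auto
          next
            case False
            then have "j \<in> {1..k}" using ij by auto
            then show ?thesis using i1 iF False Vd ij unfolding V'_def by auto
          qed
        qed
      qed
      have sumeq: "(\<Sum>i\<in>{1..Suc k}. PP G (V' i) (V' i)) = (\<Sum>i\<in>{1..k}. PP G (V i) (V i)) + PP G W W"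
      proof -
        have "(\<Sum>i\<in>{1..Suc k}. PP G (V' i) (V' i)) = (\<Sum>i\<in>{1..k}. PP G (V' i) (V' i)) + PP G (V' (Suc k)) (V' (Suc k))"
          by simp
        also have "(\<Sum>i\<in>{1..k}. PP G (V' i) (V' i)) = (\<Sum>i\<in>{1..k}. PP G (V i) (V i))"
          unfolding V'_def by (intro sum.cong) auto
        finally show ?thesis unfolding V'_def by simp
      qed
      have key: "PP G D D + PP G W W \<le> PP G D' D' + 2 * (card W * card D')"
      proof -
        have e1: "PP G D D = PP G W D + PP G D' D" using PP_union_left[OF fW fD' WD, of G D] unfolding DWD[symmetric] .
        have e2: "PP G D' D = PP G D' W + PP G D' D'" using PP_union_right[OF fW fD' WD, of G D'] unfolding DWD[symmetric] .
        have e3: "PP G D' W = PP G W D'" using PP_sym[OF fD' fW] .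
        have e4: "PP G W D = PP G W W + PP G W D'" using PP_union_right[OF fW fD' WD, of G W] unfolding DWD[symmetric] .
        have "PP G W D \<le> card W * card D'"
        proof -
          have "PP G W D = (\<Sum>w\<in>W. card (nb G D w))" by (simp add: PP_def)
          also have "\<dots> \<le> (\<Sum>w\<in>W. card D')"
            using xmax WsD unfolding D'_def by (intro sum_mono) auto
          finally show ?thesis by (simp add: mult.commute)
        qed
        then show ?thesis using e1 e2 e3 e4 by linarith
      qed
      have cardD: "card D = card W + card D'" using card_Un_disjoint[OF fW fD' WD] unfolding DWD[symmetric] .
      have ar: "(real k + 1) * real (PP G D D + ((\<Sum>i\<in>{1..k}. PP G (V i) (V i)) + PP G W W))
          \<le> real k * (real (card W) + real (card D'))^2 + 2*(real k + 1)*real s*(real (card W) + real (card D'))"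
      proof (rule arith_step[where X = "real (PP G D' D') + real (\<Sum>i\<in>{1..k}. PP G (V i) (V i))"])
        show "real k * (real (PP G D' D') + real (\<Sum>i\<in>{1..k}. PP G (V i) (V i)))
          \<le> (real k - 1) * (real (card D'))^2 + 2 * real k * real s * real (card D')"
          using Vb Suc.hyps by (simp add: of_nat_diff)
        show "real (PP G D D + ((\<Sum>i\<in>{1..k}. PP G (V i) (V i)) + PP G W W))
          \<le> real (PP G D' D') + real (\<Sum>i\<in>{1..k}. PP G (V i) (V i)) + 2 * real (card W) * real (card D')"
        proof -
          have "real (PP G D D + PP G W W) \<le> real (PP G D' D' + 2 * (card W * card D'))"
            using key by (simp only: of_nat_le_iff)
          then show ?thesis by simp
        qed
      qed (use Suc.hyps in auto)
      show ?thesis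
        apply (intro exI[of _ V'] conjI u' d')
        using ar cardD sumeq by (simp add: add.commute add.left_commute)
    qed
  qed
qed



lemma bfree_cn:
  assumes sg: "simple_graph n G" and nB: "\<not> contains_subgraph n G (p+q) (B_graph p q)"
    and Kn: "K \<subseteq> {..<n}" and Kc: "clq G K" and Kp: "card K = p"
  shows "card {v\<in>{..<n}. \<forall>u\<in>K. {u,v}\<in>G} \<le> q - 1"
proof (rule ccontr)
  define C where "C = {v\<in>{..<n}. \<forall>u\<in>K. {u,v}\<in>G}"
  assume "\<not> card {v\<in>{..<n}. \<forall>u\<in>K. {u,v}\<in>G} \<le> q - 1"
  then have "q \<le> card C" unfolding C_def by simp
  then obtain C' where C': "C' \<subseteq> C" "card C' = q" "finite C'" by (rule obtain_subset_with_card_n)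
  have fK: "finite K" using Kn finite_subset by blast
  obtain g where g: "bij_betw g {0..<card K} K" using ex_bij_betw_nat_finite[OF fK] by blast
  obtain h where h: "bij_betw h {0..<card C'} C'" using ex_bij_betw_nat_finite[OF C'(3)] by blast
  have gK: "g i \<in> K" if "i < p" for i using g that Kp bij_betwE by fastforce
  have hC: "h i \<in> C" if "i < q" for i using h that C' bij_betwE by fastforce
  have ginj: "g i = g j \<Longrightarrow> i < p \<Longrightarrow> j < p \<Longrightarrow> i = j" for i j
    using bij_betw_imp_inj_on[OF g] Kp unfolding inj_on_def by auto
  have hinj: "h i = h j \<Longrightarrow> i < q \<Longrightarrow> j < q \<Longrightarrow> i = j" for i j
    using bij_betw_imp_inj_on[OF h] C'(2) unfolding inj_on_def by auto
  have disj: "u \<notin> C" if "u \<in> K" for u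
  proof
    assume "u \<in> C"
    then have "{u,u} \<in> G" using that unfolding C_def by blast
    then show False using sg_noloop[OF sg, of u] by blast
  qed
  define f where "f i = (if i < p then g i else h (i - p))" for i
  have "contains_subgraph n G (p+q) (B_graph p q)"
    unfolding contains_subgraph_def
  proof (intro exI[of _ f] conjI)
    show "inj_on f {..<p+q}"
    proof (rule inj_onI)
      fix i j assume ij: "i \<in> {..<p+q}" "j \<in> {..<p+q}" "f i = f j"
      show "i = j"
      proof (cases "i < p")
        case True
        note iT = True
        show ?thesis
        proof (cases "j < p")
          case True then show ?thesis using iT ij ginj unfolding f_def by auto
        next
          case False
          then have "f j \<in> C" "f i \<in> K" using iT ij hC[of "j-p"] gK[of i] unfolding f_def by auto
          then show ?thesis using disj ij by auto
        qed
      next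
        case False
        note iF = False
        show ?thesis
        proof (cases "j < p")
          case True
          then have "f i \<in> C" "f j \<in> K" using iF ij hC[of "i-p"] gK[of j] unfolding f_def by auto
          then show ?thesis using disj ij by auto
        next
          case False
          then have "i - p = j - p" using iF ij hinj[of "i-p" "j-p"] unfolding f_def by auto
          then show ?thesis using iF False by auto
        qed
      qed
    qed
    show "f ` {..<p+q} \<subseteq> {..<n}"
    proof
      fix y assume "y \<in> f ` {..<p+q}"
      then obtain i where i: "i < p+q" "y = f i" by auto
      show "y \<in> {..<n}"
      proof (cases "i < p")
        case True then show ?thesis using i gK Kn unfolding f_def by auto
      next
        case False then have "h (i-p) \<in> C" using i hC by auto
        then show ?thesis using i False unfolding f_def C_def by auto
      qed
    qed
    show "\<forall>e\<in>B_graph p q. f ` e \<in> G"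
    proof
      fix e assume "e \<in> B_graph p q"
      then obtain i j where e: "e = {i,j}" "i \<noteq> j" "i < p" "j < p+q" unfolding B_graph_def by blast
      have fe: "f ` e = {f i, f j}" using e by simp
      show "f ` e \<in> G"
      proof (cases "j < p")
        case True
        then have "f i \<in> K" "f j \<in> K" "f i \<noteq> f j" using e gK ginj unfolding f_def by auto
        then show ?thesis using Kc fe unfolding clq_def by auto
      next
        case False
        then have "f j \<in> C" "f i \<in> K" using e hC[of "j-p"] gK[of i] unfolding f_def by auto
        then show ?thesis using fe unfolding C_def by auto
      qed
    qed
  qed
  then show False using nB by simp
qed



definition lab :: "nat \<Rightarrow> nat \<Rightarrow> nat" where
  "lab p v = (if v < 5 then v else if (v-5) mod p < 2 then (v-5) mod p else (v-5) mod p + 3)"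
definition cyc :: "nat \<Rightarrow> nat \<Rightarrow> bool" where
  "cyc a b \<longleftrightarrow> a < 5 \<and> b < 5 \<and> (a+1 = b \<or> b+1 = a \<or> (a=0 \<and> b=4) \<or> (a=4 \<and> b=0))"
definition hadj :: "nat \<Rightarrow> nat \<Rightarrow> bool" where
  "hadj a b \<longleftrightarrow> a \<noteq> b \<and> (5 \<le> a \<or> 5 \<le> b \<or> cyc a b)"
definition Fc :: "nat \<Rightarrow> nat \<Rightarrow> nat set set" where
  "Fc n p = {{u,v}|u v. u\<noteq>v \<and> u<n \<and> v<n \<and> hadj (lab p u) (lab p v)}"

lemma mem_sym_dbl:
  assumes "\<And>a b. P a b \<Longrightarrow> P b a"
  shows "({u,v} \<in> {{a,b}|a b. P a b}) = P u v"
proof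
  assume "{u,v} \<in> {{a,b}|a b. P a b}"
  then obtain a b where ab: "{u,v} = {a,b}" "P a b" by blast
  then have "(u = a \<and> v = b) \<or> (u = b \<and> v = a)" using doubleton_eq_iff[of u v a b] by simp
  then show "P u v" using ab(2) assms by auto
next
  assume "P u v" then show "{u,v} \<in> {{a,b}|a b. P a b}" by blast
qed

lemma hadj_sym: "hadj a b = hadj b a"
  unfolding hadj_def cyc_def by auto

lemma Fc_mem: "{u,v} \<in> Fc n p \<longleftrightarrow> u\<noteq>v \<and> u<n \<and> v<n \<and> hadj (lab p u) (lab p v)"
  unfolding Fc_def by (rule mem_sym_dbl) (auto simp: hadj_sym)

lemma Fc_simple: "simple_graph n (Fc n p)"
  unfolding simple_graph_def Fc_def by blast

lemma lab_lt: "p \<ge> 3 \<Longrightarrow> lab p v < p + 3"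
proof -
  assume p: "p \<ge> 3"
  have "(v-5) mod p < p" using p by simp
  then show ?thesis unfolding lab_def using p by auto
qed

lemma no_tri: "a < 5 \<Longrightarrow> b < 5 \<Longrightarrow> c < 5 \<Longrightarrow> a \<noteq> b \<Longrightarrow> b \<noteq> c \<Longrightarrow> a \<noteq> c \<Longrightarrow>
    cyc a b \<Longrightarrow> cyc b c \<Longrightarrow> cyc a c \<Longrightarrow> False"
  unfolding cyc_def by arith

lemma Fc_Kfree:
  assumes p: "p \<ge> 3" and inj: "inj_on f {..p}"
    and adj: "\<forall>i\<le>p. \<forall>j\<le>p. i\<noteq>j \<longrightarrow> {f i, f j} \<in> Fc n p"
  shows False
proof -
  define \<phi> where "\<phi> i = lab p (f i)" for i
  have ha: "hadj (\<phi> i) (\<phi> j)" if "i \<le> p" "j \<le> p" "i \<noteq> j" for i j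
    using adj that Fc_mem unfolding \<phi>_def by blast
  have injp: "inj_on \<phi> {..p}"
    by (rule inj_onI) (use ha in \<open>force simp: hadj_def\<close>)
  define L where "L = \<phi> ` {..p}"
  have cL: "card L = p + 1" unfolding L_def using card_image[OF injp] by simp
  have Lsub: "L \<subseteq> {..<p+3}" unfolding L_def \<phi>_def using lab_lt[OF p] by auto
  have LL: "hadj x y" if "x \<in> L" "y \<in> L" "x \<noteq> y" for x y
    using that ha unfolding L_def by auto
  have c2: "card (L \<inter> {5..<p+3}) \<le> p - 2"
    using card_mono[of "{5..<p+3}" "L \<inter> {5..<p+3}"] by auto
  have "L = (L \<inter> {..<5}) \<union> (L \<inter> {5..<p+3})" using Lsub by auto
  then have "card L \<le> card (L \<inter> {..<5}) + card (L \<inter> {5..<p+3})"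
    by (metis card_Un_le)
  then have "3 \<le> card (L \<inter> {..<5})" using cL c2 p by linarith
  then obtain T where T: "T \<subseteq> L \<inter> {..<5}" "card T = 3" by (meson obtain_subset_with_card_n)
  then obtain a b c where abc: "T = {a,b,c}" "a \<noteq> b" "b \<noteq> c" "a \<noteq> c" by (meson card_3_iff)
  have inL: "a \<in> L" "b \<in> L" "c \<in> L" "a < 5" "b < 5" "c < 5" using T abc by auto
  have "cyc a b" "cyc b c" "cyc a c"
    using LL[of a b] LL[of b c] LL[of a c] inL abc unfolding hadj_def by auto
  then show False using no_tri inL abc by blast
qed

lemma Fc_Bfree:
  assumes p: "p \<ge> 3" and q: "q \<ge> 1"
  shows "\<not> contains_subgraph n (Fc n p) (p+q) (B_graph p q)"
proof
  assume "contains_subgraph n (Fc n p) (p+q) (B_graph p q)"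
  then obtain f where f: "inj_on f {..<p+q}" "\<forall>e\<in>B_graph p q. f ` e \<in> Fc n p"
    unfolding contains_subgraph_def by blast
  have inj: "inj_on f {..p}" using f(1) q by (auto intro: inj_on_subset)
  have "\<forall>i\<le>p. \<forall>j\<le>p. i\<noteq>j \<longrightarrow> {f i, f j} \<in> Fc n p"
  proof (intro allI impI)
    fix i j assume ij: "i \<le> p" "j \<le> p" "i \<noteq> j"
    show "{f i, f j} \<in> Fc n p"
    proof (cases "i < j")
      case True
      then have "{i,j} \<in> B_graph p q" using ij q unfolding B_graph_def by force
      then show ?thesis using f(2) by force
    next
      case False
      then have "{j,i} \<in> B_graph p q" using ij q unfolding B_graph_def by force
      then have "f ` {j,i} \<in> Fc n p" using f(2) by blast
      then show ?thesis by (simp add: insert_commute)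
    qed
  qed
  then show False using Fc_Kfree[OF p inj] by blast
qed



lemma Fc_chi:
  assumes p: "p \<ge> 3" and n: "n \<ge> p + 5"
  shows "p < chromatic_number n (Fc n p)"
proof -
  have nc: "\<not> colorable n (Fc n p) p"
  proof
    assume "colorable n (Fc n p) p"
    then obtain c where c1: "\<forall>v<n. c v < p" and c2: "\<forall>u v. {u,v}\<in>Fc n p \<and> u\<noteq>v \<longrightarrow> c u \<noteq> c v"
      unfolding colorable_def by blast
    have cne: "c u \<noteq> c v" if "u<n" "v<n" "u\<noteq>v" "hadj (lab p u) (lab p v)" for u v
      by (intro c2[rule_format] conjI) (simp_all add: Fc_mem that)
    have labK: "lab p v = v - 2" if "v \<in> {7..<p+5}" for v
    proof -
      have "v - 5 < p" using that by auto
      then have "(v-5) mod p = v - 5" by (rule mod_less)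
      then show ?thesis using that unfolding lab_def by auto
    qed
    define K where "K = {7..<p+5}"
    have injc: "inj_on c K"
    proof (rule inj_onI)
      fix u v assume uv: "u \<in> K" "v \<in> K" "c u = c v"
      show "u = v"
      proof (rule ccontr)
        assume "u \<noteq> v"
        moreover have "hadj (lab p u) (lab p v)" using uv labK \<open>u \<noteq> v\<close> unfolding K_def hadj_def by auto
        ultimately show False using cne[of u v] uv n unfolding K_def by auto
      qed
    qed
    have cK: "card (c ` K) = p - 2" using card_image[OF injc] unfolding K_def by simp
    have cKs: "c ` K \<subseteq> {..<p}" using c1 n unfolding K_def by auto
    define T where "T = {..<p} - c ` K"
    have cT: "card T = 2" unfolding T_def using card_Diff_subset[OF finite_subset[OF cKs] cKs] cK p by simp
    have inT: "c v \<in> T" if "v < 5" for v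
    proof -
      have "c v \<noteq> c w" if "w \<in> K" for w
      proof -
        have "hadj (lab p v) (lab p w)" using labK[of w] \<open>w \<in> K\<close> \<open>v < 5\<close> unfolding K_def hadj_def lab_def by auto
        then show ?thesis using cne[of v w] \<open>w \<in> K\<close> \<open>v < 5\<close> n unfolding K_def by auto
      qed
      then show ?thesis unfolding T_def using c1 \<open>v < 5\<close> n by auto
    qed
    have e: "c 0 \<noteq> c 1" "c 1 \<noteq> c 2" "c 2 \<noteq> c 3" "c 3 \<noteq> c 4" "c 4 \<noteq> c 0"
      using cne[of 0 1] cne[of 1 2] cne[of 2 3] cne[of 3 4] cne[of 4 0] n
      unfolding hadj_def cyc_def lab_def by auto
    obtain a b where ab: "T = {a,b}" using cT[unfolded card_2_iff] by metis
    have "c 0 \<in> {a,b}" "c 1 \<in> {a,b}" "c 2 \<in> {a,b}" "c 3 \<in> {a,b}" "c 4 \<in> {a,b}"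
      using inT ab by auto
    then show False using e by auto
  qed
  have cn: "colorable n (Fc n p) n" unfolding colorable_def by (intro exI[of _ "\<lambda>v. v"]) auto
  show ?thesis
  proof (rule ccontr)
    assume "\<not> p < chromatic_number n (Fc n p)"
    then have le: "(LEAST k. colorable n (Fc n p) k) \<le> p" unfolding chromatic_number_def by simp
    have "colorable n (Fc n p) (LEAST k. colorable n (Fc n p) k)" using cn by (rule LeastI)
    then have "colorable n (Fc n p) p" using le unfolding colorable_def by (meson order_less_le_trans)
    then show False using nc by simp
  qed
qed

lemma Fc_admissible:
  assumes "p \<ge> 3" "q \<ge> 1" "n \<ge> p + 5"
  shows "admissible n p q (Fc n p)"
  unfolding admissible_def using Fc_simple Fc_chi Fc_Bfree assms by blast

lemma mod_class_card:
  assumes p: "p > 0"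
  shows "card {v\<in>{5..<n}. (v-5) mod p = r} \<le> (n-5) div p + 1"
proof -
  let ?A = "{v\<in>{5..<n}. (v-5) mod p = r}"
  have "inj_on (\<lambda>v. (v-5) div p) ?A"
  proof (rule inj_onI)
    fix v w assume vw: "v \<in> ?A" "w \<in> ?A" "(v-5) div p = (w-5) div p"
    have "v - 5 = (v-5) div p * p + (v-5) mod p" by simp
    also have "\<dots> = (w-5) div p * p + (w-5) mod p" using vw by simp
    also have "\<dots> = w - 5" by simp
    finally show "v = w" using vw by auto
  qed
  moreover have "(\<lambda>v. (v-5) div p) ` ?A \<subseteq> {..(n-5) div p}" by (auto intro: div_le_mono)
  ultimately have "card ?A \<le> card {..(n-5) div p}" by (rule card_inj_on_le) simp
  then show ?thesis by simp
qed



lemma Fc_card: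
  assumes p: "p \<ge> 3" and n: "n \<ge> p + 5"
  shows "(real p - 1) / real p * real n ^ 2 - 11 * real n \<le> 2 * real (card (Fc n p))"
proof -
  define P where "P u v \<longleftrightarrow> 5\<le>u \<and> 5\<le>v \<and> u<n \<and> v<n \<and> (u-5) mod p \<noteq> (v-5) mod p" for u v
  have Psym: "P a b \<Longrightarrow> P b a" for a b unfolding P_def by auto
  define F' where "F' = {{u,v}|u v. P u v}"
  have F'mem: "{u,v} \<in> F' \<longleftrightarrow> P u v" for u v unfolding F'_def by (rule mem_sym_dbl) (rule Psym)
  have F'sub: "F' \<subseteq> Fc n p"
  proof
    fix e assume "e \<in> F'"
    then obtain u v where e: "e = {u,v}" "P u v" unfolding F'_def by blast
    define r where "r = (u-5) mod p"
    define s where "s = (v-5) mod p"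
    have rs: "r \<noteq> s" "r < p" "s < p" using e(2) p unfolding P_def r_def s_def by auto
    have lu: "lab p u = (if r < 2 then r else r + 3)" using e(2) unfolding P_def lab_def r_def by auto
    have lv: "lab p v = (if s < 2 then s else s + 3)" using e(2) unfolding P_def lab_def s_def by auto
    have "hadj (lab p u) (lab p v)" unfolding lu lv hadj_def cyc_def using rs by auto
    moreover have "u \<noteq> v" using rs unfolding r_def s_def by auto
    ultimately show "e \<in> Fc n p" unfolding e(1) Fc_mem using e(2) unfolding P_def by auto
  qed
  have finF: "finite (Fc n p)" using sg_finite[OF Fc_simple] .
  have finF': "finite F'" using finite_subset[OF F'sub finF] .
  have cF: "card F' \<le> card (Fc n p)" using card_mono[OF finF F'sub] .
  have dbl: "\<forall>e\<in>F'. \<exists>u v. u \<noteq> v \<and> e = {u,v}"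
  proof
    fix e assume "e \<in> F'"
    then obtain u v where e: "e = {u,v}" "P u v" unfolding F'_def by blast
    then have "u \<noteq> v" unfolding P_def by auto
    then show "\<exists>u v. u \<noteq> v \<and> e = {u,v}" using e(1) by blast
  qed
  have c2: "card {(u,v). {u,v}\<in>F'} = 2 * card F'" using pairs2[OF finF' dbl] .
  define S where "S u = {v\<in>{5..<n}. (v-5) mod p \<noteq> (u-5) mod p}" for u
  have Seq: "{(u,v). {u,v}\<in>F'} = (SIGMA u:{5..<n}. S u)"
  proof (rule set_eqI)
    fix z :: "nat \<times> nat"
    obtain u v where z: "z = (u,v)" by (cases z)
    show "z \<in> {(u,v). {u,v}\<in>F'} \<longleftrightarrow> z \<in> (SIGMA u:{5..<n}. S u)"
      unfolding z using F'mem[of u v] unfolding P_def S_def by auto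
  qed
  have cS: "card (SIGMA u:{5..<n}. S u) = (\<Sum>u\<in>{5..<n}. card (S u))"
    by (rule card_SigmaI) (auto simp: S_def)
  define m where "m = real n - 5"
  have m: "real (n - 5) = m" "m \<ge> 0" using n unfolding m_def by auto
  have Sb: "m - m / real p - 1 \<le> real (card (S u))" for u
  proof -
    let ?A = "{v\<in>{5..<n}. (v-5) mod p = (u-5) mod p}"
    have un: "{5..<n} = S u \<union> ?A" unfolding S_def by auto
    have di: "S u \<inter> ?A = {}" unfolding S_def by auto
    have "card {5..<n} = card (S u) + card ?A"
      using card_Un_disjoint[of "S u" ?A] di unfolding un[symmetric] by (simp add: S_def)
    then have "n - 5 = card (S u) + card ?A" by simp
    moreover have "card ?A \<le> (n-5) div p + 1" using mod_class_card p by simp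
    ultimately have "real (n-5) \<le> real (card (S u)) + real ((n-5) div p) + 1" by linarith
    moreover have "real ((n-5) div p) \<le> real (n-5) / real p" by (rule of_nat_div_le_of_nat)
    ultimately have h1: "real (n-5) \<le> real (card (S u)) + real ((n-5) div p) + 1"
      and h2: "real ((n-5) div p) \<le> real (n-5) / real p" by blast+
    from h1 h2 show ?thesis unfolding m(1) by linarith
  qed
  have "(\<Sum>u\<in>{5..<n}. (m - m / real p - 1)) \<le> (\<Sum>u\<in>{5..<n}. real (card (S u)))"
    by (rule sum_mono) (rule Sb)
  moreover have "(\<Sum>u\<in>{5..<n}. (m - m / real p - 1)) = real (n-5) * (m - m / real p - 1)" by simp
  moreover have "(\<Sum>u\<in>{5..<n}. real (card (S u))) = real (card (SIGMA u:{5..<n}. S u))"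
    unfolding cS by simp
  ultimately have A: "m * (m - m / real p - 1) \<le> real (card (SIGMA u:{5..<n}. S u))"
    unfolding m(1) by linarith
  have "card (SIGMA u:{5..<n}. S u) \<le> 2 * card (Fc n p)" using cF unfolding Seq[symmetric] c2 by simp
  then have "real (card (SIGMA u:{5..<n}. S u)) \<le> 2 * real (card (Fc n p))" by simp
  with A have main: "m * (m - m / real p - 1) \<le> 2 * real (card (Fc n p))" by linarith
  define t where "t = (real p - 1) / real p"
  have t: "0 \<le> t" "t \<le> 1" using p unfolding t_def by auto
  have mt: "m * (m - m / real p - 1) = t * m^2 - m"
  proof -
    have p0: "real p \<noteq> 0" using p by simp
    have "t * m^2 = m^2 - m^2 / real p" unfolding t_def using p0 by (simp add: diff_divide_distrib left_diff_distrib)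
    then show ?thesis by (simp add: algebra_simps power2_eq_square)
  qed
  have "t * m^2 = t * real n ^ 2 - t * (10 * real n - 25)"
    unfolding m_def by (simp add: algebra_simps power2_eq_square)
  moreover have "t * (10 * real n - 25) \<le> 10 * real n"
  proof -
    have "0 \<le> 10 * real n - 25" using n by simp
    then have "t * (10 * real n - 25) \<le> 1 * (10 * real n - 25)" using t by (intro mult_right_mono) auto
    then show ?thesis by simp
  qed
  moreover have "m \<le> real n" unfolding m_def by simp
  ultimately have "t * real n ^ 2 - 11 * real n \<le> m * (m - m / real p - 1)" using mt by linarith
  then show ?thesis using main unfolding t_def by linarith
qed



lemma sum_aux: "(\<Sum>i\<in>I. (a i::real) * (x - a i)) = x * (\<Sum>i\<in>I. a i) - (\<Sum>i\<in>I. a i ^ 2)"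
proof -
  have "(\<Sum>i\<in>I. a i * (x - a i)) = (\<Sum>i\<in>I. x * a i - a i^2)"
    by (rule sum.cong) (auto simp: algebra_simps power2_eq_square)
  then show ?thesis by (simp add: sum_subtractf sum_distrib_left)
qed

lemma sum_sq_aux: "(\<Sum>i\<in>I. ((a i::real) - c)^2) = (\<Sum>i\<in>I. a i^2) - 2*c*(\<Sum>i\<in>I. a i) + real (card I) * c^2"
proof -
  have "(\<Sum>i\<in>I. (a i - c)^2) = (\<Sum>i\<in>I. (a i^2 - 2*c*a i) + c^2)"
    by (rule sum.cong) (auto simp: algebra_simps power2_eq_square)
  also have "\<dots> = (\<Sum>i\<in>I. a i^2 - 2*c*a i) + real (card I) * c^2"
    by (simp add: sum.distrib)
  also have "(\<Sum>i\<in>I. a i^2 - 2*c*a i) = (\<Sum>i\<in>I. a i^2) - 2*c*(\<Sum>i\<in>I. a i)"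
    by (simp add: sum_subtractf sum_distrib_left)
  finally show ?thesis .
qed

lemma core:
  fixes p q n :: nat and \<eta> :: real and G :: "nat set set"
  assumes p: "p \<ge> 3" and q: "q \<ge> 1" and eta0: "0 < \<eta>" and eta7: "\<eta> < 1/7"
    and nbig: "real n \<ge> 22 / \<eta>^2 + (real q + 5) / \<eta>^3" and np: "n \<ge> p + 5"
    and GE: "G \<in> extremal_family n p q"
  shows "(\<exists>V. vertex_partition n p V \<and>
              real (\<Sum>i\<in>{1..p}. edges_in G (V i)) \<le> \<eta> ^ 3 * real n ^ 2) \<and>
         (\<forall>V. vertex_partition n p V \<and>
              real (\<Sum>i\<in>{1..p}. edges_in G (V i)) \<le> \<eta> ^ 3 * real n ^ 2 \<longrightarrow>
              (\<forall>i\<in>{1..p}. \<bar>real (card (V i)) - real n / real p\<bar> \<le> \<eta> * real n))"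
proof -
  have adm: "admissible n p q G" and maxi: "\<And>F. admissible n p q F \<Longrightarrow> card F \<le> card G"
    using GE unfolding extremal_family_def by auto
  have sg: "simple_graph n G" and nB: "\<not> contains_subgraph n G (p+q) (B_graph p q)"
    using adm unfolding admissible_def by auto
  have "card (Fc n p) \<le> card G" using maxi Fc_admissible p q np by blast
  then have low: "(real p - 1) / real p * real n ^ 2 - 11 * real n \<le> 2 * real (card G)"
    using Fc_card[OF p np] by linarith
  define D where "D = {..<n}"
  have fD: "finite D" unfolding D_def by simp
  have eG: "edges_in G D = card G"
  proof -
    have "e \<subseteq> D" if he: "e \<in> G" for e
    proof -
      obtain u v where "e = {u,v}" "u < n" "v < n" using sg he unfolding simple_graph_def by blast
      then show ?thesis unfolding D_def by simp
    qed
    then have "{e\<in>G. e \<subseteq> D} = G" by blast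
    then show ?thesis unfolding edges_in_def by simp
  qed
  have PPD: "PP G D D = 2 * card G" using edges2[OF sg fD] eG by simp
  have pp: "real p > 0" using p by simp
  have lowp: "(real p - 1) * real n ^ 2 - 11 * real p * real n \<le> real p * (2 * real (card G))"
  proof -
    have "real p * ((real p - 1) / real p * real n ^ 2 - 11 * real n) \<le> real p * (2 * real (card G))"
      using low pp by (intro mult_left_mono) auto
    moreover have "real p * ((real p - 1) / real p * real n ^ 2 - 11 * real n) = (real p - 1) * real n ^ 2 - 11 * real p * real n"
      using pp by (simp add: field_simps)
    ultimately show ?thesis by simp
  qed
  have n0: "real n > 0" using np by simp
  have e3: "\<eta>^3 > 0" using eta0 by simp
  have e2: "\<eta>^2 > 0" using eta0 by simp
  have part1: "\<exists>V. vertex_partition n p V \<and> real (\<Sum>i\<in>{1..p}. edges_in G (V i)) \<le> \<eta> ^ 3 * real n ^ 2"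
  proof -
    have noloop: "\<And>u. {u,u} \<notin> G" using sg_noloop[OF sg] .
    have k1: "1 \<le> p" using p by simp
    have cn: "\<forall>K. K \<subseteq> D \<and> clq G K \<and> card K = p \<longrightarrow> card {v\<in>D. \<forall>u\<in>K. {u,v}\<in>G} \<le> q - 1"
    proof (intro allI impI)
      fix K assume "K \<subseteq> D \<and> clq G K \<and> card K = p"
      then show "card {v\<in>D. \<forall>u\<in>K. {u,v}\<in>G} \<le> q - 1"
        unfolding D_def using bfree_cn[OF sg nB, of K] by (elim conjE)
    qed
    obtain V where Vu: "(\<Union>i\<in>{1..p}. V i) = D" and Vd: "\<forall>i\<in>{1..p}. \<forall>j\<in>{1..p}. i\<noteq>j \<longrightarrow> V i \<inter> V j = {}"
      and Vb: "real p * (real (PP G D D) + real (\<Sum>i\<in>{1..p}. PP G (V i) (V i)))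
         \<le> real (p-1) * real (card D)^2 + 2*real p*real (q-1)*real (card D)"
      using furedi[OF noloop k1, where s="q-1", THEN spec, of D, THEN mp, OF fD, THEN mp, OF cn]
      by (elim exE conjE) (rule that, assumption+)
    have VD: "V i \<subseteq> D" if "i \<in> {1..p}" for i
    proof -
      have "V i \<subseteq> (\<Union>i\<in>{1..p}. V i)" using that by (rule UN_upper)
      then show ?thesis unfolding Vu .
    qed
    have fV: "finite (V i)" if "i \<in> {1..p}" for i using VD[OF that] fD by (rule finite_subset)
    have "(\<Sum>i\<in>{1..p}. PP G (V i) (V i)) = (\<Sum>i\<in>{1..p}. 2 * edges_in G (V i))"
      using edges2[OF sg fV] by simp
    then have sPP: "real (\<Sum>i\<in>{1..p}. PP G (V i) (V i)) = 2 * real (\<Sum>i\<in>{1..p}. edges_in G (V i))"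
      by (simp add: sum_distrib_left)
    define X where "X = real (\<Sum>i\<in>{1..p}. edges_in G (V i))"
    have cD: "card D = n" unfolding D_def by simp
    have "real p * (2 * real (card G) + 2 * X) \<le> (real p - 1) * real n ^2 + 2 * real p * (real q - 1) * real n"
      using Vb unfolding PPD sPP X_def[symmetric] cD using p q by (simp add: of_nat_diff)
    then have "2 * real p * X \<le> 11 * real p * real n + 2 * real p * (real q - 1) * real n"
      using lowp by (simp add: algebra_simps)
    then have "real p * (2 * X) \<le> real p * (11 * real n + 2 * (real q - 1) * real n)"
      by (simp add: algebra_simps)
    then have "2 * X \<le> 11 * real n + 2 * (real q - 1) * real n" using pp by simp
    then have X: "X \<le> (real q + 5) * real n" using n0 by (simp add: algebra_simps)
    have "real q + 5 \<le> \<eta>^3 * real n"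
    proof -
      have "22 / \<eta>^2 \<ge> 0" using e2 by simp
      then have "(real q + 5) / \<eta>^3 \<le> real n" using nbig by linarith
      then show ?thesis using e3 by (simp add: divide_le_eq mult.commute)
    qed
    then have "(real q + 5) * real n \<le> \<eta>^3 * real n * real n" using n0 by (intro mult_right_mono) auto
    then have "X \<le> \<eta>^3 * real n ^ 2" using X by (simp add: power2_eq_square mult.assoc)
    moreover have "vertex_partition n p V" unfolding vertex_partition_def using Vu Vd unfolding D_def by (intro conjI)
    ultimately show ?thesis unfolding X_def by blast
  qed
  have part2: "\<forall>V. vertex_partition n p V \<and>
              real (\<Sum>i\<in>{1..p}. edges_in G (V i)) \<le> \<eta> ^ 3 * real n ^ 2 \<longrightarrow>
              (\<forall>i\<in>{1..p}. \<bar>real (card (V i)) - real n / real p\<bar> \<le> \<eta> * real n)"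
  proof (intro allI impI ballI)
    fix V k assume H: "vertex_partition n p V \<and> real (\<Sum>i\<in>{1..p}. edges_in G (V i)) \<le> \<eta> ^ 3 * real n ^ 2"
      and k: "k \<in> {1..p}"
    have Vu: "(\<Union>i\<in>{1..p}. V i) = D" and Vd: "\<forall>i\<in>{1..p}. \<forall>j\<in>{1..p}. i\<noteq>j \<longrightarrow> V i \<inter> V j = {}"
      using H unfolding vertex_partition_def D_def by auto
    have Se: "real (\<Sum>i\<in>{1..p}. edges_in G (V i)) \<le> \<eta> ^ 3 * real n ^ 2" using H by blast
    have VD: "V i \<subseteq> D" if "i \<in> {1..p}" for i
    proof -
      have "V i \<subseteq> (\<Union>i\<in>{1..p}. V i)" using that by (rule UN_upper)
      then show ?thesis unfolding Vu .
    qed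
    have fV: "finite (V i)" if "i \<in> {1..p}" for i using VD[OF that] fD by (rule finite_subset)
    have cD: "card D = n" unfolding D_def by simp
    define a where "a i = real (card (V i))" for i
    have "card (\<Union>i\<in>{1..p}. V i) = (\<Sum>i\<in>{1..p}. card (V i))"
      using card_UN_disjoint[of "{1..p}" V] fV Vd by simp
    then have "(\<Sum>i\<in>{1..p}. card (V i)) = n" unfolding Vu cD by simp
    then have sa: "(\<Sum>i\<in>{1..p}. a i) = real n" unfolding a_def by (metis of_nat_sum)
    have PPs: "PP G D D = (\<Sum>i\<in>{1..p}. PP G (V i) D)"
    proof -
      have "PP G D D = sum (\<lambda>u. card (nb G D u)) (\<Union>i\<in>{1..p}. V i)" unfolding PP_def Vu ..
      also have "\<dots> = (\<Sum>i\<in>{1..p}. sum (\<lambda>u. card (nb G D u)) (V i))"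
        by (rule sum.UNION_disjoint) (use fV Vd in auto)
      finally show ?thesis unfolding PP_def .
    qed
    have PPi: "PP G (V i) D \<le> 2 * edges_in G (V i) + card (V i) * (n - card (V i))" if i: "i \<in> {1..p}" for i
    proof -
      have un: "V i \<union> (D - V i) = D" using VD[OF i] by blast
      have fDV: "finite (D - V i)" using fD by simp
      have "PP G (V i) D = PP G (V i) (V i) + PP G (V i) (D - V i)"
        using PP_union_right[OF fV[OF i] fDV, of G "V i"] unfolding un by blast
      moreover have "PP G (V i) (V i) = 2 * edges_in G (V i)" using edges2[OF sg fV[OF i]] by simp
      moreover have "PP G (V i) (D - V i) \<le> card (V i) * (n - card (V i))"
      proof -
        have "card (nb G (D - V i) u) \<le> card (D - V i)" for u
          using fDV by (intro card_mono) (auto simp: nb_def)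
        then have "PP G (V i) (D - V i) \<le> card (V i) * card (D - V i)" unfolding PP_def
          using sum_bounded_above[of "V i" "\<lambda>u. card (nb G (D - V i) u)" "card (D - V i)"] by simp
        moreover have "card (D - V i) = n - card (V i)" using card_Diff_subset[OF fV[OF i] VD[OF i]] cD by simp
        ultimately show ?thesis by simp
      qed
      ultimately show ?thesis by linarith
    qed
    have "(\<Sum>i\<in>{1..p}. PP G (V i) D) \<le> (\<Sum>i\<in>{1..p}. 2 * edges_in G (V i) + card (V i) * (n - card (V i)))"
      by (rule sum_mono) (rule PPi)
    then have "PP G D D \<le> (\<Sum>i\<in>{1..p}. 2 * edges_in G (V i) + card (V i) * (n - card (V i)))"
      unfolding PPs .
    then have "real (PP G D D) \<le> (\<Sum>i\<in>{1..p}. 2 * real (edges_in G (V i)) + a i * (real n - a i))"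
    proof -
      assume A: "PP G D D \<le> (\<Sum>i\<in>{1..p}. 2 * edges_in G (V i) + card (V i) * (n - card (V i)))"
      have "card (V i) \<le> n" if "i \<in> {1..p}" for i using card_mono[OF fD VD[OF that]] cD by simp
      then have "real (\<Sum>i\<in>{1..p}. 2 * edges_in G (V i) + card (V i) * (n - card (V i)))
          = (\<Sum>i\<in>{1..p}. 2 * real (edges_in G (V i)) + a i * (real n - a i))"
        unfolding a_def of_nat_sum by (intro sum.cong) (auto simp: of_nat_diff)
      moreover have "real (PP G D D) \<le> real (\<Sum>i\<in>{1..p}. 2 * edges_in G (V i) + card (V i) * (n - card (V i)))"
        using A by (simp only: of_nat_le_iff)
      ultimately show ?thesis by simp
    qed
    also have "\<dots> = 2 * real (\<Sum>i\<in>{1..p}. edges_in G (V i)) + real n * (\<Sum>i\<in>{1..p}. a i) - (\<Sum>i\<in>{1..p}. a i ^ 2)"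
      by (simp only: sum.distrib sum_aux of_nat_sum sum_distrib_left[symmetric] of_nat_mult of_nat_numeral)
    finally have up: "2 * real (card G) \<le> 2 * real (\<Sum>i\<in>{1..p}. edges_in G (V i)) + real n ^ 2 - (\<Sum>i\<in>{1..p}. a i ^ 2)"
      unfolding PPD sa by (simp add: power2_eq_square)
    define c where "c = real n / real p"
    have "(\<Sum>i\<in>{1..p}. (a i - c)^2) = (\<Sum>i\<in>{1..p}. a i ^ 2) - 2 * c * (\<Sum>i\<in>{1..p}. a i) + real p * c^2"
      using sum_sq_aux[of a c "{1..p}"] by simp
    also have "\<dots> = (\<Sum>i\<in>{1..p}. a i ^ 2) - real n ^ 2 / real p"
    proof -
      have "real p * c^2 = real n * c" unfolding c_def using pp by (simp add: power2_eq_square)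
      moreover have "c * real n = real n^2 / real p" unfolding c_def by (simp add: power2_eq_square)
      ultimately show ?thesis unfolding sa by (simp add: algebra_simps)
    qed
    finally have sq: "(\<Sum>i\<in>{1..p}. (a i - c)^2) = (\<Sum>i\<in>{1..p}. a i ^ 2) - real n ^ 2 / real p" .
    have "(a k - c)^2 \<le> (\<Sum>i\<in>{1..p}. (a i - c)^2)"
      by (rule member_le_sum) (use k in auto)
    then have sqk: "real n ^ 2 / real p + (a k - c)^2 \<le> (\<Sum>i\<in>{1..p}. a i ^ 2)" using sq by linarith
    show "\<bar>real (card (V k)) - real n / real p\<bar> \<le> \<eta> * real n"
    proof (rule ccontr)
      assume "\<not> ?thesis"
      then have big: "\<eta> * real n < \<bar>a k - c\<bar>" unfolding a_def c_def by simp
      have "(\<eta> * real n)^2 < \<bar>a k - c\<bar>^2"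
        using big eta0 n0 by (intro power_strict_mono) auto
      then have big2: "\<eta>^2 * real n^2 < (a k - c)^2" by (simp add: power_mult_distrib)
      have lowe: "real n ^ 2 - real n ^ 2 / real p - 11 * real n \<le> 2 * real (card G)"
      proof -
        have "(real p - 1) / real p * real n ^ 2 = real n ^ 2 - real n ^ 2 / real p"
          using pp by (simp add: field_simps)
        then show ?thesis using low by linarith
      qed
      have "\<eta>^2 * real n^2 < 2 * \<eta>^3 * real n^2 + 11 * real n"
        using lowe up sqk big2 Se by linarith
      moreover have "real n * (\<eta>^2 * real n * (1 - 2*\<eta>)) = \<eta>^2 * real n^2 - 2 * \<eta>^3 * real n^2"
        by (simp add: algebra_simps power2_eq_square power3_eq_cube)
      ultimately have "real n * (\<eta>^2 * real n * (1 - 2*\<eta>)) < real n * 11" by linarith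
      then have l: "\<eta>^2 * real n * (1 - 2*\<eta>) < 11" using n0 by simp
      have "(real q + 5) / \<eta>^3 \<ge> 0" using e3 by simp
      then have "22 / \<eta>^2 \<le> real n" using nbig by linarith
      then have "22 \<le> \<eta>^2 * real n" using e2 by (simp add: divide_le_eq mult.commute)
      moreover have "1/2 \<le> 1 - 2*\<eta>" using eta7 by simp
      ultimately have "22 * (1/2) \<le> \<eta>^2 * real n * (1 - 2*\<eta>)"
        by (intro mult_mono) auto
      then show False using l by simp
    qed
  qed
  show ?thesis using part1 part2 by blast
qed


theorem lemma3p1:
  fixes p q :: nat and \<eta> :: real
  assumes "p \<ge> 3" and "q \<ge> 1" and "0 < \<eta>" and "\<eta> < 1 / (7 * real p ^ 5 * real q)"
  shows "\<exists>N. \<forall>n \<ge> N. \<forall>G. G \<in> extremal_family n p q \<and>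
           min_degree n G = Min (min_degree n ` extremal_family n p q) \<longrightarrow>
         (\<exists>V. vertex_partition n p V \<and>
              real (\<Sum>i\<in>{1..p}. edges_in G (V i)) \<le> \<eta> ^ 3 * real n ^ 2) \<and>
         (\<forall>V. vertex_partition n p V \<and>
              real (\<Sum>i\<in>{1..p}. edges_in G (V i)) \<le> \<eta> ^ 3 * real n ^ 2 \<longrightarrow>
              (\<forall>i\<in>{1..p}. \<bar>real (card (V i)) - real n / real p\<bar> \<le> \<eta> * real n))"
proof -
  have p1: "real p \<ge> 1" using assms(1) by simp
  have "real p ^ 5 \<ge> 1" using p1 by (rule one_le_power)
  moreover have "real q \<ge> 1" using assms(2) by simp
  ultimately have "real p ^ 5 * real q \<ge> 1 * 1" by (intro mult_mono) auto
  then have "7 \<le> 7 * real p ^ 5 * real q" by simp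
  then have "1 / (7 * real p ^ 5 * real q) \<le> 1 / 7" by (intro divide_left_mono) auto
  then have eta7: "\<eta> < 1/7" using assms(4) by linarith
  define N where "N = nat \<lceil>22 / \<eta>^2 + (real q + 5) / \<eta>^3\<rceil> + p + 5"
  show ?thesis
  proof (intro exI[of _ N] allI impI)
    fix n G
    assume nN: "N \<le> n" and GG: "G \<in> extremal_family n p q \<and>
           min_degree n G = Min (min_degree n ` extremal_family n p q)"
    have "22 / \<eta>^2 + (real q + 5) / \<eta>^3 \<le> real (nat \<lceil>22 / \<eta>^2 + (real q + 5) / \<eta>^3\<rceil>)"
      by (rule real_nat_ceiling_ge)
    also have "\<dots> \<le> real n"
    proof -
      have "nat \<lceil>22 / \<eta>^2 + (real q + 5) / \<eta>^3\<rceil> \<le> n" using nN unfolding N_def by linarith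
      then show ?thesis by (simp only: of_nat_le_iff)
    qed
    finally have nbig: "22 / \<eta>^2 + (real q + 5) / \<eta>^3 \<le> real n" .
    have np: "p + 5 \<le> n" using nN unfolding N_def by simp
    show "(\<exists>V. vertex_partition n p V \<and>
              real (\<Sum>i\<in>{1..p}. edges_in G (V i)) \<le> \<eta> ^ 3 * real n ^ 2) \<and>
         (\<forall>V. vertex_partition n p V \<and>
              real (\<Sum>i\<in>{1..p}. edges_in G (V i)) \<le> \<eta> ^ 3 * real n ^ 2 \<longrightarrow>
              (\<forall>i\<in>{1..p}. \<bar>real (card (V i)) - real n / real p\<bar> \<le> \<eta> * real n))"
      using core[OF assms(1) assms(2) assms(3) eta7 nbig np] GG by blast
  qed
qed

end
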